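(* Let $n\ge1$ and let $\mathcal W$ be a nonprincipal ultrafilter on a countably infinite set which is not a P-point. If $\mathcal W$ is $(n+1,T(n+1))$-weakly Ramsey, then it is also $(n,T(n))$-weakly Ramsey.
   Context: An ultrafilter $\mathcal W$ on a countably infinite set $S$ is a P-point if for every function $f$ on $S$ there is $A\in\mathcal W$ with $f\restriction A$ finite-to-one or constant. $\mathcal W$ is $(n,t)$-weakly Ramsey if whenever $[S]^n$ is partitioned into finitely many pieces there is $H\in\mathcal W$ with $[H]^n$ meeting at most $t$ pieces. An $n$-type is a linear pre-order of the formal symbols $x_1,\dots,x_n,y_1,\dots,y_n$ such that $y_1<\dots<y_n$ strictly, each $x_i<y_i$ strictly, and any two distinct equivalent symbols are both $x$'s; $T(n)$ denotes the (finite) number of $n$-types (e.g. $T(2)=4$). *)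

theory Defs
  imports Main "HOL-Library.Ramsey" "HOL-Library.Countable_Set"
begin

definition ultrafilter_on :: "'a set \<Rightarrow> 'a set set \<Rightarrow> bool" where
  "ultrafilter_on S W \<longleftrightarrow>
     W \<subseteq> Pow S \<and> S \<in> W \<and> {} \<notin> W \<and>
     (\<forall>A B. A \<in> W \<and> B \<in> W \<longrightarrow> A \<inter> B \<in> W) \<and>
     (\<forall>A B. A \<in> W \<and> A \<subseteq> B \<and> B \<subseteq> S \<longrightarrow> B \<in> W) \<and>
     (\<forall>A. A \<subseteq> S \<longrightarrow> A \<in> W \<or> S - A \<in> W)"

definition nonprincipal :: "'a set \<Rightarrow> 'a set set \<Rightarrow> bool" where
  "nonprincipal S W \<longleftrightarrow> (\<forall>x\<in>S. {x} \<notin> W)"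

text \<open>P-point: every function on S is finite-to-one or constant on some member of W.
  Since S is countable, functions into nat (= omega) suffice.\<close>
definition P_point :: "'a set \<Rightarrow> 'a set set \<Rightarrow> bool" where
  "P_point S W \<longleftrightarrow>
     (\<forall>f :: 'a \<Rightarrow> nat. \<exists>A\<in>W.
        (\<forall>y. finite {x\<in>A. f x = y}) \<or> (\<exists>c. \<forall>x\<in>A. f x = c))"

definition weakly_Ramsey :: "nat \<Rightarrow> nat \<Rightarrow> 'a set \<Rightarrow> 'a set set \<Rightarrow> bool" where
  "weakly_Ramsey n t S W \<longleftrightarrow>
     (\<forall>(k::nat) (c :: 'a set \<Rightarrow> nat). (\<forall>X\<in>[S]\<^bsup>n\<^esup>. c X < k) \<longrightarrow>
        (\<exists>H\<in>W. card (c ` ([H]\<^bsup>n\<^esup>)) \<le> t))"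

text \<open>Symbols: x_i = Inl i, y_i = Inr i for i in {1..n}.\<close>
definition type_symbols :: "nat \<Rightarrow> (nat + nat) set" where
  "type_symbols n = Inl ` {1..n} \<union> Inr ` {1..n}"

text \<open>n-types: linear pre-orders R (R(a,b) means a \<le> b) on the symbols with
  y_1 < ... < y_n strictly, x_i < y_i strictly, and distinct equivalent symbols both x's.\<close>
definition n_types :: "nat \<Rightarrow> (nat + nat) rel set" where
  "n_types n = {R. R \<subseteq> type_symbols n \<times> type_symbols n \<and>
     (\<forall>a\<in>type_symbols n. (a, a) \<in> R) \<and>
     (\<forall>a b c. (a, b) \<in> R \<and> (b, c) \<in> R \<longrightarrow> (a, c) \<in> R) \<and>
     (\<forall>a\<in>type_symbols n. \<forall>b\<in>type_symbols n. (a, b) \<in> R \<or> (b, a) \<in> R) \<and>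
     (\<forall>i\<in>{1..n}. \<forall>j\<in>{1..n}. i < j \<longrightarrow> (Inr i, Inr j) \<in> R \<and> (Inr j, Inr i) \<notin> R) \<and>
     (\<forall>i\<in>{1..n}. (Inl i, Inr i) \<in> R \<and> (Inr i, Inl i) \<notin> R) \<and>
     (\<forall>a b. (a, b) \<in> R \<and> (b, a) \<in> R \<and> a \<noteq> b \<longrightarrow> (\<exists>i j. a = Inl i \<and> b = Inl j))}"

definition T :: "nat \<Rightarrow> nat" where
  "T n = card (n_types n)"

end

theory Submission imports Defs begin

lemma finite_type_symbols[simp]: "finite (type_symbols m)"
  by (simp add: type_symbols_def)

lemma finite_n_types: "finite (n_types m)"
proof -
  have "n_types m \<subseteq> Pow (type_symbols m \<times> type_symbols m)"
    by (auto simp: n_types_def)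
  then show ?thesis by (rule finite_subset) simp
qed

definition rk :: "(nat+nat) rel \<Rightarrow> nat \<Rightarrow> nat+nat \<Rightarrow> nat" where
  "rk R m a = card {b\<in>type_symbols m. (b,a)\<in>R \<and> (a,b)\<notin>R}"

lemma rk_props:
  assumes R: "R \<in> n_types m" and a: "a \<in> type_symbols m" and b: "b \<in> type_symbols m"
  shows "(a,b) \<in> R \<longleftrightarrow> rk R m a \<le> rk R m b"
    and "rk R m a < card (type_symbols m)"
proof -
  have tr: "\<And>a b c. (a, b) \<in> R \<Longrightarrow> (b, c) \<in> R \<Longrightarrow> (a, c) \<in> R"
    and tot: "\<And>a b. a\<in>type_symbols m \<Longrightarrow> b\<in>type_symbols m \<Longrightarrow> (a, b) \<in> R \<or> (b, a) \<in> R"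
    and rf: "\<And>a. a\<in>type_symbols m \<Longrightarrow> (a,a)\<in>R"
    using R unfolding n_types_def by blast+
  define P where "P x = {b\<in>type_symbols m. (b,x)\<in>R \<and> (x,b)\<notin>R}" for x
  have rkP: "rk R m x = card (P x)" for x by (simp add: rk_def P_def)
  show "(a,b) \<in> R \<longleftrightarrow> rk R m a \<le> rk R m b"
  proof
    assume ab: "(a,b)\<in>R"
    have "P a \<subseteq> P b" unfolding P_def using ab tr by blast
    then show "rk R m a \<le> rk R m b" unfolding rkP by (intro card_mono) (auto simp: P_def)
  next
    assume le: "rk R m a \<le> rk R m b"
    show "(a,b)\<in>R"
    proof (rule ccontr)
      assume nab: "(a,b)\<notin>R"
      then have ba: "(b,a)\<in>R" using tot a b by blast
      have "insert b (P b) \<subseteq> P a" unfolding P_def using nab ba tr b by blast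
      moreover have "b \<notin> P b" by (auto simp: P_def)
      moreover have fP: "finite (P x)" for x by (simp add: P_def)
      ultimately have "card (insert b (P b)) \<le> card (P a)" by (intro card_mono) auto
      then have "card (P b) < card (P a)" using \<open>b \<notin> P b\<close> fP by simp
      then show False using le unfolding rkP by simp
    qed
  qed
  have "P a \<subseteq> type_symbols m - {a}" unfolding P_def by auto
  then have "card (P a) \<le> card (type_symbols m - {a})" by (intro card_mono) auto
  also have "\<dots> < card (type_symbols m)" using card_Diff1_less[OF finite_type_symbols a] .
  finally show "rk R m a < card (type_symbols m)" unfolding rkP .
qed

definition vl :: "(nat\<Rightarrow>nat) \<Rightarrow> nat list \<Rightarrow> nat+nat \<Rightarrow> nat" where
  "vl h zs a = (case a of Inl i \<Rightarrow> h (zs!(i-1)) | Inr i \<Rightarrow> zs!(i-1))"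

definition tpl :: "(nat\<Rightarrow>nat) \<Rightarrow> nat \<Rightarrow> nat list \<Rightarrow> (nat+nat) rel" where
  "tpl h m zs = {(a,b). a \<in> type_symbols m \<and> b \<in> type_symbols m \<and> vl h zs a \<le> vl h zs b}"

lemma sym_in[simp]: "Inl j \<in> type_symbols m \<longleftrightarrow> j \<in> {1..m}" "Inr j \<in> type_symbols m \<longleftrightarrow> j \<in> {1..m}"
  by (auto simp: type_symbols_def)

lemma smono_le:
  assumes "\<forall>t t'. t' < t \<longrightarrow> t < N \<longrightarrow> (w::nat\<Rightarrow>nat) t' < w t" "x < N" "y < N"
  shows "w x \<le> w y \<longleftrightarrow> x \<le> y"
  using assms by (metis le_less not_le)

lemma realize:
  assumes R: "R \<in> n_types m"
    and Q: "\<forall>B. \<exists>v>B. v \<in> Vq" and Vq: "\<forall>v\<in>Vq. \<forall>B. \<exists>z\<in>A. z > B \<and> h z = v"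
  shows "\<exists>zs. sorted zs \<and> distinct zs \<and> length zs = m \<and> set zs \<subseteq> A \<and> tpl h m zs = R"
proof -
  define r where "r = rk R m"
  define L where "L = card (type_symbols m)"
  define isY where "isY t \<longleftrightarrow> (\<exists>j\<in>{1..m}. r (Inr j) = t)" for t
  define cond where "cond w t \<longleftrightarrow> (\<forall>j\<in>{1..m}. r (Inr j) = t \<longrightarrow> w t \<in> A \<and> h (w t) = w (r (Inl j)))
      \<and> (\<not> isY t \<longrightarrow> w t \<in> Vq)" for w :: "nat \<Rightarrow> nat" and t
  have Rsub: "R \<subseteq> type_symbols m \<times> type_symbols m"
    and yy: "\<And>i j. i\<in>{1..m} \<Longrightarrow> j\<in>{1..m} \<Longrightarrow> i < j \<Longrightarrow> (Inr j, Inr i) \<notin> R"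
    and xy: "\<And>i. i\<in>{1..m} \<Longrightarrow> (Inr i, Inl i) \<notin> R"
    and tie: "\<And>a b. (a, b) \<in> R \<Longrightarrow> (b, a) \<in> R \<Longrightarrow> a \<noteq> b \<Longrightarrow> (\<exists>i j. a = Inl i \<and> b = Inl j)"
    using R unfolding n_types_def by blast+
  have rR: "a \<in> type_symbols m \<Longrightarrow> b \<in> type_symbols m \<Longrightarrow> (a,b) \<in> R \<longleftrightarrow> r a \<le> r b" for a b
    using rk_props(1)[OF R] by (simp add: r_def)
  have rL: "a \<in> type_symbols m \<Longrightarrow> r a < L" for a
    using rk_props(2)[OF R] by (simp add: r_def L_def)
  have rIn: "j\<in>{1..m} \<Longrightarrow> r (Inl j) < r (Inr j)" for j
    using xy[of j] rR[of "Inr j" "Inl j"] by simp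
  have rInj: "i\<in>{1..m} \<Longrightarrow> j\<in>{1..m} \<Longrightarrow> i < j \<Longrightarrow> r (Inr i) < r (Inr j)" for i j
    using yy[of i j] rR[of "Inr j" "Inr i"] by simp
  have rInj': "i\<in>{1..m} \<Longrightarrow> j\<in>{1..m} \<Longrightarrow> r (Inr i) = r (Inr j) \<Longrightarrow> i = j" for i j
    using rInj[of i j] rInj[of j i] by (cases i j rule: linorder_cases) auto
  have notY: "j\<in>{1..m} \<Longrightarrow> \<not> isY (r (Inl j))" for j
  proof
    assume j: "j\<in>{1..m}" and "isY (r (Inl j))"
    then obtain j' where j': "j'\<in>{1..m}" "r (Inr j') = r (Inl j)" unfolding isY_def by auto
    then have "(Inl j, Inr j') \<in> R" "(Inr j', Inl j) \<in> R" using rR j by auto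
    from tie[OF this] show False by auto
  qed
  have main: "N \<le> L \<Longrightarrow> \<exists>w. (\<forall>t t'. t' < t \<longrightarrow> t < N \<longrightarrow> w t' < w t) \<and> (\<forall>t<N. cond w t)" for N
  proof (induction N)
    case 0 then show ?case by auto
  next
    case (Suc N)
    then obtain w where mono: "\<forall>t t'. t' < t \<longrightarrow> t < N \<longrightarrow> w t' < w t" and cw: "\<forall>t<N. cond w t" by auto
    define B where "B = Max (insert 0 (w ` {..<N}))"
    have wB: "t < N \<Longrightarrow> w t \<le> B" for t unfolding B_def by (intro Max_ge) auto
    have "\<exists>z. z > B \<and> cond (w(N:=z)) N"
    proof (cases "isY N")
      case True
      then obtain j where j: "j\<in>{1..m}" "r (Inr j) = N" unfolding isY_def by auto
      have lt: "r (Inl j) < N" using rIn[OF j(1)] j(2) by simp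
      then have "w (r (Inl j)) \<in> Vq" using cw notY[OF j(1)] unfolding cond_def by blast
      then obtain z where z: "z \<in> A" "z > B" "h z = w (r (Inl j))" using Vq by blast
      have A1: "(w(N := z)) N \<in> A \<and> h ((w(N := z)) N) = (w(N := z)) (r (Inl j'))"
        if "j'\<in>{1..m}" "r (Inr j') = N" for j'
      proof -
        have "j' = j" using rInj'[of j' j] j that by simp
        moreover have "r (Inl j) \<noteq> N" using lt by simp
        ultimately show ?thesis using z by simp
      qed
      have "cond (w(N:=z)) N" unfolding cond_def using A1 True by blast
      then show ?thesis using z by blast
    next
      case False
      obtain v where "v > B" "v \<in> Vq" using Q by blast
      then show ?thesis using False unfolding cond_def isY_def by auto
    qed
    then obtain z where z: "z > B" "cond (w(N:=z)) N" by blast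
    have "\<forall>t t'. t' < t \<longrightarrow> t < Suc N \<longrightarrow> (w(N:=z)) t' < (w(N:=z)) t"
    proof -
      have wz: "t < N \<Longrightarrow> w t < z" for t using wB[of t] z(1) by linarith
      show ?thesis using mono wz by (auto simp: less_Suc_eq)
    qed
    moreover have "cond (w(N:=z)) t" if "t < N" for t
    proof -
      have c: "cond w t" using cw that by auto
      have eq1: "(w(N:=z)) t = w t" using that by simp
      have eq2: "(w(N:=z)) (r (Inl j)) = w (r (Inl j))" if "j\<in>{1..m}" "r (Inr j) = t" for j
        using rIn[OF that(1)] that(2) \<open>t < N\<close> by simp
      show ?thesis unfolding cond_def eq1
      proof (intro conjI ballI impI)
        fix j assume j: "j\<in>{1..m}" "r (Inr j) = t"
        then show "w t \<in> A" using c unfolding cond_def by blast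
        show "h (w t) = (w(N:=z)) (r (Inl j))" using c j eq2[OF j] unfolding cond_def by simp
      next
        assume "\<not> isY t" then show "w t \<in> Vq" using c unfolding cond_def by blast
      qed
    qed
    ultimately show ?case using z(2)
      by (intro exI[where x="w(N:=z)"] conjI) (auto simp: less_Suc_eq simp del: fun_upd_apply)
  qed
  obtain w where mono: "\<forall>t t'. t' < t \<longrightarrow> t < L \<longrightarrow> w t' < w t" and cw: "\<forall>t<L. cond w t"
    using main[of L] by auto
  define zs where "zs = map (\<lambda>j. w (r (Inr (Suc j)))) [0..<m]"
  have len: "length zs = m" by (simp add: zs_def)
  have nth: "i\<in>{1..m} \<Longrightarrow> zs!(i-1) = w (r (Inr i))" for i by (auto simp: zs_def)
  have vlw: "a \<in> type_symbols m \<Longrightarrow> vl h zs a = w (r a)" for a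
  proof (cases a)
    case (Inl i)
    assume "a \<in> type_symbols m"
    then have i: "i\<in>{1..m}" using Inl by simp
    then have "cond w (r (Inr i))" using cw rL[of "Inr i"] by simp
    then show ?thesis using Inl i nth[OF i] unfolding cond_def vl_def by auto
  next
    case (Inr i)
    assume "a \<in> type_symbols m"
    then show ?thesis using Inr nth by (simp add: vl_def)
  qed
  have "sorted_wrt (<) zs" unfolding sorted_wrt_iff_nth_less
  proof (intro allI impI)
    fix i j assume "i < j" "j < length zs"
    then have "w (r (Inr (Suc i))) < w (r (Inr (Suc j)))"
      using rInj[of "Suc i" "Suc j"] mono rL[of "Inr (Suc j)"] len by auto
    then show "zs ! i < zs ! j" using \<open>i < j\<close> \<open>j < length zs\<close> len by (simp add: zs_def)
  qed
  then have sd: "sorted zs" "distinct zs" by (simp_all add: strict_sorted_iff)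
  have "set zs \<subseteq> A"
  proof
    fix z assume "z \<in> set zs"
    then obtain j where j: "j < m" "z = w (r (Inr (Suc j)))" by (auto simp: zs_def)
    then have "cond w (r (Inr (Suc j)))" using cw rL[of "Inr (Suc j)"] by simp
    then show "z \<in> A" using j unfolding cond_def by auto
  qed
  moreover have "tpl h m zs = R"
  proof (intro set_eqI iffI)
    fix p assume "p \<in> tpl h m zs"
    then obtain a b where p: "p = (a,b)" "a \<in> type_symbols m" "b \<in> type_symbols m" "w (r a) \<le> w (r b)"
      by (auto simp: tpl_def vlw)
    then show "p \<in> R" using smono_le[OF mono rL rL] rR by auto
  next
    fix p assume "p \<in> R"
    then obtain a b where p: "p = (a,b)" "a \<in> type_symbols m" "b \<in> type_symbols m" "(a,b) \<in> R"
      using Rsub by auto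
    then show "p \<in> tpl h m zs" using smono_le[OF mono rL rL] rR by (auto simp: tpl_def vlw)
  qed
  ultimately show ?thesis using sd len by blast
qed

lemma strict_nth:
  assumes "sorted zs" "distinct zs" "i < j" "j < length zs"
  shows "zs!i < zs!j"
proof -
  have "sorted_wrt (<) zs" using assms(1,2) by (simp add: strict_sorted_iff)
  then show ?thesis using assms(3,4) by (simp add: sorted_wrt_iff_nth_less)
qed

lemma valid:
  assumes s: "sorted zs" "distinct zs" and len: "length zs = m"
    and hz: "\<forall>z\<in>set zs. h z < z" and hne: "\<forall>z\<in>set zs. \<forall>z'\<in>set zs. h z \<noteq> z'"
  shows "tpl h m zs \<in> n_types m"
proof -
  have mem: "i\<in>{1..m} \<Longrightarrow> zs!(i-1) \<in> set zs" for i using len by auto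
  have lt: "i\<in>{1..m} \<Longrightarrow> j\<in>{1..m} \<Longrightarrow> i < j \<Longrightarrow> zs!(i-1) < zs!(j-1)" for i j
    using strict_nth[OF s, of "i-1" "j-1"] len by auto
  have inj: "i\<in>{1..m} \<Longrightarrow> j\<in>{1..m} \<Longrightarrow> zs!(i-1) = zs!(j-1) \<Longrightarrow> i = j" for i j
    using lt[of i j] lt[of j i] by (cases i j rule: linorder_cases) auto
  have sym_cases: "a \<in> type_symbols m \<Longrightarrow> (\<exists>i\<in>{1..m}. a = Inl i) \<or> (\<exists>i\<in>{1..m}. a = Inr i)" for a
    by (auto simp: type_symbols_def)
  show ?thesis unfolding n_types_def
  proof (intro CollectI conjI ballI allI impI)
    show "tpl h m zs \<subseteq> type_symbols m \<times> type_symbols m" by (auto simp: tpl_def)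
  next
    fix a assume "a \<in> type_symbols m" then show "(a,a) \<in> tpl h m zs" by (simp add: tpl_def)
  next
    fix a b c assume "(a, b) \<in> tpl h m zs \<and> (b, c) \<in> tpl h m zs"
    then show "(a, c) \<in> tpl h m zs" by (auto simp: tpl_def)
  next
    fix a b assume "a \<in> type_symbols m" "b \<in> type_symbols m"
    then show "(a, b) \<in> tpl h m zs \<or> (b, a) \<in> tpl h m zs" by (auto simp: tpl_def)
  next
    fix i j assume "i\<in>{1..m}" "j\<in>{1..m}" "i < j"
    then show "(Inr i, Inr j) \<in> tpl h m zs" "(Inr j, Inr i) \<notin> tpl h m zs"
      using lt[of i j] by (auto simp: tpl_def vl_def)
  next
    fix i assume i: "i\<in>{1..m}"
    then have "h (zs!(i-1)) < zs!(i-1)" using hz mem by blast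
    then show "(Inl i, Inr i) \<in> tpl h m zs" "(Inr i, Inl i) \<notin> tpl h m zs"
      using i by (auto simp: tpl_def vl_def)
  next
    fix a b assume ab: "(a, b) \<in> tpl h m zs \<and> (b, a) \<in> tpl h m zs \<and> a \<noteq> b"
    then have a: "a \<in> type_symbols m" and b: "b \<in> type_symbols m" and eq: "vl h zs a = vl h zs b"
      by (auto simp: tpl_def)
    show "\<exists>i j. a = Inl i \<and> b = Inl j"
    proof (rule ccontr)
      assume nn: "\<not> (\<exists>i j. a = Inl i \<and> b = Inl j)"
      from sym_cases[OF a] sym_cases[OF b] nn show False
      proof (elim disjE bexE)
        fix i j assume ij: "i\<in>{1..m}" "j\<in>{1..m}" "a = Inr i" "b = Inr j"
        then show False using inj[of i j] eq ab by (simp add: vl_def)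
      next
        fix i j assume ij: "i\<in>{1..m}" "j\<in>{1..m}" "a = Inl i" "b = Inr j"
        then show False using hne mem[of i] mem[of j] eq by (simp add: vl_def)
      next
        fix i j assume ij: "i\<in>{1..m}" "j\<in>{1..m}" "a = Inr i" "b = Inl j"
        then show False using hne mem[of i] mem[of j] eq by (simp add: vl_def) metis
      qed auto
    qed
  qed
qed

definition ext :: "nat \<Rightarrow> (nat+nat) rel \<Rightarrow> (nat+nat) rel" where
  "ext n R = R \<union> {(a, Inl (Suc n)) | a. a \<in> type_symbols n}
     \<union> {(a, Inr (Suc n)) | a. a \<in> type_symbols (Suc n)} \<union> {(Inl (Suc n), Inl (Suc n))}"

lemma syms_Suc: "type_symbols (Suc n) = insert (Inl (Suc n)) (insert (Inr (Suc n)) (type_symbols n))"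
  by (auto simp: type_symbols_def)

lemma ext_tpl:
  assumes len: "length zs = n" and zz: "\<forall>z\<in>set zs. h z < z \<and> z < h z'" and hz': "h z' < z'"
  shows "tpl h (Suc n) (zs @ [z']) = ext n (tpl h n zs)"
proof -
  have v1: "vl h (zs @ [z']) a = vl h zs a" if "a \<in> type_symbols n" for a
    using that len by (auto simp: type_symbols_def vl_def nth_append)
  have vx: "vl h (zs @ [z']) (Inl (Suc n)) = h z'" "vl h (zs @ [z']) (Inr (Suc n)) = z'"
    using len by (simp_all add: vl_def nth_append)
  have below: "vl h zs a < h z'" if "a \<in> type_symbols n" for a
  proof -
    from that obtain i where i: "i\<in>{1..n}" "a = Inl i \<or> a = Inr i" by (auto simp: type_symbols_def)
    then have "zs!(i-1) \<in> set zs" using len by auto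
    then show ?thesis using i zz by (auto simp: vl_def)
  qed
  have below2: "vl h zs a \<le> z'" if "a \<in> type_symbols n" for a
    using below[OF that] hz' by simp
  have notin: "Inl (Suc n) \<notin> type_symbols n" "Inr (Suc n) \<notin> type_symbols n" by simp_all
  show ?thesis
  proof (intro set_eqI iffI)
    fix p assume "p \<in> tpl h (Suc n) (zs @ [z'])"
    then obtain a b where p: "p = (a,b)" "a \<in> type_symbols (Suc n)" "b \<in> type_symbols (Suc n)"
      "vl h (zs @ [z']) a \<le> vl h (zs @ [z']) b" by (auto simp: tpl_def)
    show "p \<in> ext n (tpl h n zs)"
      using p unfolding syms_Suc
      apply (elim insertE)
      using v1 vx below hz' notin by (fastforce simp: ext_def tpl_def syms_Suc)+
  next
    fix p assume "p \<in> ext n (tpl h n zs)"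
    then show "p \<in> tpl h (Suc n) (zs @ [z'])"
      using v1 vx below below2 hz' notin unfolding ext_def tpl_def syms_Suc
      by (auto intro: less_imp_le order.trans)
  qed
qed

lemma uf_props:
  assumes "ultrafilter_on S W"
  shows "W \<subseteq> Pow S" "S \<in> W" "{} \<notin> W" "\<And>A B. A \<in> W \<Longrightarrow> B \<in> W \<Longrightarrow> A \<inter> B \<in> W"
    "\<And>A B. A \<in> W \<Longrightarrow> A \<subseteq> B \<Longrightarrow> B \<subseteq> S \<Longrightarrow> B \<in> W"
    "\<And>A. A \<subseteq> S \<Longrightarrow> A \<notin> W \<Longrightarrow> S - A \<in> W"
proof -
  note u = assms[unfolded ultrafilter_on_def]
  show "W \<subseteq> Pow S" "S \<in> W" "{} \<notin> W" using u by simp_all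
  show "\<And>A B. A \<in> W \<Longrightarrow> B \<in> W \<Longrightarrow> A \<inter> B \<in> W" using u by simp
  show "\<And>A B. A \<in> W \<Longrightarrow> A \<subseteq> B \<Longrightarrow> B \<subseteq> S \<Longrightarrow> B \<in> W"
  proof -
    fix A B assume "A \<in> W" "A \<subseteq> B" "B \<subseteq> S"
    then show "B \<in> W" using conjunct1[OF conjunct2[OF conjunct2[OF conjunct2[OF conjunct2[OF u]]]]] by blast
  qed
  show "\<And>A. A \<subseteq> S \<Longrightarrow> A \<notin> W \<Longrightarrow> S - A \<in> W"
  proof -
    fix A assume "A \<subseteq> S" "A \<notin> W"
    then show "S - A \<in> W" using conjunct2[OF conjunct2[OF conjunct2[OF conjunct2[OF conjunct2[OF u]]]]] by blast
  qed
qed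

lemma union_W:
  assumes U: "ultrafilter_on S W" and fin: "finite V"
  shows "(\<Union>v\<in>V. F v) \<in> W \<Longrightarrow> (\<forall>v. F v \<subseteq> S) \<Longrightarrow> \<exists>v\<in>V. F v \<in> W"
  using fin
proof (induction V)
  case empty then show ?case using uf_props(3)[OF U] by simp
next
  case (insert x V)
  show ?case
  proof (cases "F x \<in> W")
    case True then show ?thesis by blast
  next
    case False
    have sub: "F x \<subseteq> S" using insert.prems(2) by blast
    have "S - F x \<in> W" using uf_props(6)[OF U sub False] .
    then have "(\<Union>v\<in>insert x V. F v) \<inter> (S - F x) \<in> W"
      using uf_props(4)[OF U] insert.prems(1) by blast
    moreover have "(\<Union>v\<in>insert x V. F v) \<inter> (S - F x) \<subseteq> (\<Union>v\<in>V. F v)" by auto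
    moreover have "(\<Union>v\<in>V. F v) \<subseteq> S" using insert.prems(2) by auto
    ultimately have "(\<Union>v\<in>V. F v) \<in> W" using uf_props(5)[OF U] by blast
    from insert.IH[OF this insert.prems(2)] obtain v where "v\<in>V" "F v \<in> W" by blast
    then show ?thesis by blast
  qed
qed

lemma subsingleton_fin: "(\<forall>x\<in>A. \<forall>y\<in>A. x = y) \<Longrightarrow> finite A"
proof (cases "A = {}")
  case False
  assume a: "\<forall>x\<in>A. \<forall>y\<in>A. x = y"
  from False obtain x where "x \<in> A" by auto
  then have "A \<subseteq> {x}" using a by auto
  then show ?thesis by (rule finite_subset) simp
qed simp

theorem mainTheorem5:
  fixes S :: "'a set" and W :: "'a set set" and n :: nat
  assumes "n \<ge> 1"
    and "countable S" and "infinite S"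
    and "ultrafilter_on S W" and "nonprincipal S W"
    and "\<not> P_point S W"
    and "weakly_Ramsey (n + 1) (T (n + 1)) S W"
  shows "weakly_Ramsey n (T n) S W"
proof -
  note U = assms(4)
  obtain f0 :: "'a \<Rightarrow> nat" where NP: "\<And>A. A \<in> W \<Longrightarrow> (\<exists>y. infinite {x\<in>A. f0 x = y}) \<and> (\<forall>c. \<exists>x\<in>A. f0 x \<noteq> c)"
    using assms(6) unfolding P_point_def by blast
  define e where "e = to_nat_on S"
  have einj: "inj_on e S" unfolding e_def using assms(2) by (rule inj_on_to_nat_on)
  have WS: "\<And>A. A \<in> W \<Longrightarrow> A \<subseteq> S" using uf_props(1)[OF U] by blast
  define g where "g y = (LEAST m. m \<in> e ` {s\<in>S. f0 s = f0 y})" for y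
  have P3: "\<exists>s\<in>S. f0 s = f0 y \<and> g y = e s" if "y \<in> S" for y
  proof -
    have "e y \<in> e ` {s\<in>S. f0 s = f0 y}" using that by blast
    then have "g y \<in> e ` {s\<in>S. f0 s = f0 y}" unfolding g_def by (rule LeastI)
    then show ?thesis by auto
  qed
  have P1: "g y \<le> e y" if "y \<in> S" for y
    unfolding g_def by (rule Least_le) (use that in blast)
  have P2: "g y = g y' \<longleftrightarrow> f0 y = f0 y'" if yy: "y \<in> S" "y' \<in> S" for y y'
  proof
    assume "f0 y = f0 y'" then show "g y = g y'" unfolding g_def by simp
  next
    assume eq: "g y = g y'"
    obtain s where s: "s\<in>S" "f0 s = f0 y" "g y = e s" using P3[OF yy(1)] by blast
    obtain s' where s': "s'\<in>S" "f0 s' = f0 y'" "g y' = e s'" using P3[OF yy(2)] by blast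
    have "s = s'" using eq s s' einj by (metis inj_on_eq_iff)
    then show "f0 y = f0 y'" using s s' by simp
  qed
  define M where "M = {y\<in>S. g y = e y}"
  define G where "G = S - M"
  have "M \<notin> W"
  proof
    assume "M \<in> W"
    then obtain v where inf: "infinite {x\<in>M. f0 x = v}" using NP by blast
    have "finite {x\<in>M. f0 x = v}"
    proof (rule subsingleton_fin, intro ballI)
      fix x1 x2 assume "x1 \<in> {x\<in>M. f0 x = v}" "x2 \<in> {x\<in>M. f0 x = v}"
      then have "x1 \<in> S" "x2 \<in> S" "g x1 = e x1" "g x2 = e x2" "f0 x1 = f0 x2" by (auto simp: M_def)
      then have "e x1 = e x2" using P2 by metis
      then show "x1 = x2" using einj \<open>x1 \<in> S\<close> \<open>x2 \<in> S\<close> by (meson inj_on_eq_iff)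
    qed
    then show False using inf by simp
  qed
  then have GW: "G \<in> W" unfolding G_def using uf_props(6)[OF U, of M] by (auto simp: M_def)
  have GS: "G \<subseteq> S" by (auto simp: G_def)
  have Glt: "g y < e y" if "y \<in> G" for y using P1[of y] that by (auto simp: G_def M_def)
  have Gne: "g y \<noteq> e y'" if yG: "y \<in> G" "y' \<in> G" for y y'
  proof
    assume eq: "g y = e y'"
    have yS: "y \<in> S" "y' \<in> S" using yG GS by auto
    obtain s where s: "s\<in>S" "f0 s = f0 y" "g y = e s" using P3[OF yS(1)] by blast
    have "s = y'" using eq s einj yS by (metis inj_on_eq_iff)
    have "g s = g y" using P2[of s y] s yS by auto
    then have "g y' = e y'" using \<open>s = y'\<close> eq by simp
    then show False using yG(2) by (auto simp: G_def M_def)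
  qed
  define h where "h z = g (inv_into S e z)" for z
  have he: "h (e y) = g y" if "y \<in> S" for y using that einj by (simp add: h_def)
  have Vq: "\<forall>B. \<exists>v>B. \<forall>B'. \<exists>z\<in>e ` H'. z > B' \<and> h z = v" if H'W: "H' \<in> W" for H'
  proof -
    have H'S: "H' \<subseteq> S" using WS H'W .
    define Vg where "Vg = {v. infinite {y\<in>H'. g y = v}}"
    have "infinite Vg"
    proof
      assume finV: "finite Vg"
      define H1 where "H1 = {y\<in>H'. g y \<in> Vg}"
      show False
      proof (cases "H1 \<in> W")
        case True
        have "H1 = (\<Union>v\<in>Vg. {y\<in>H'. g y = v})" by (auto simp: H1_def)
        then obtain v where v: "v \<in> Vg" "{y\<in>H'. g y = v} \<in> W"
          using union_W[OF U finV, of "\<lambda>v. {y\<in>H'. g y = v}"] True H'S by auto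
        then have "{y\<in>H'. g y = v} \<noteq> {}" using uf_props(3)[OF U] by metis
        then obtain x0 where x0: "x0 \<in> H'" "g x0 = v" by auto
        obtain x where x: "x \<in> {y\<in>H'. g y = v}" "f0 x \<noteq> f0 x0" using NP[OF v(2)] by blast
        then show False using P2[of x x0] x0 H'S by auto
      next
        case False
        have H1S: "H1 \<subseteq> S" using H'S by (auto simp: H1_def)
        have "S - H1 \<in> W" using uf_props(6)[OF U H1S False] .
        then have H2W: "H' \<inter> (S - H1) \<in> W" using uf_props(4)[OF U H'W] by blast
        obtain y where inf: "infinite {x\<in>H' \<inter> (S - H1). f0 x = y}" using NP[OF H2W] by blast
        then have "{x\<in>H' \<inter> (S - H1). f0 x = y} \<noteq> {}" by (metis finite.emptyI)
        then obtain x0 where x0: "x0 \<in> H'" "x0 \<notin> H1" "f0 x0 = y" by auto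
        have "{x\<in>H' \<inter> (S - H1). f0 x = y} \<subseteq> {x\<in>H'. g x = g x0}"
          using P2 x0 H'S by auto
        moreover have "finite {x\<in>H'. g x = g x0}" using x0 by (auto simp: H1_def Vg_def)
        ultimately show False using inf finite_subset by blast
      qed
    qed
    show ?thesis
    proof
      fix B
      obtain v where v: "v > B" "v \<in> Vg" using \<open>infinite Vg\<close> unfolding infinite_nat_iff_unbounded by blast
      have "\<forall>B'. \<exists>z\<in>e ` H'. z > B' \<and> h z = v"
      proof
        fix B'
        have ij: "inj_on e {y\<in>H'. g y = v}" by (rule inj_on_subset[OF einj]) (use H'S in auto)
        have "infinite (e ` {y\<in>H'. g y = v})"
          using v(2) finite_imageD[OF _ ij] unfolding Vg_def by auto
        then obtain z where z: "z > B'" "z \<in> e ` {y\<in>H'. g y = v}"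
          unfolding infinite_nat_iff_unbounded by blast
        then show "\<exists>z\<in>e ` H'. z > B' \<and> h z = v" using he H'S by auto
      qed
      then show "\<exists>v>B. \<forall>B'. \<exists>z\<in>e ` H'. z > B' \<and> h z = v" using v by blast
    qed
  qed
  have A7: "weakly_Ramsey (Suc n) (T (Suc n)) S W" using assms(7) by simp
  show ?thesis unfolding weakly_Ramsey_def
  proof (intro allI impI)
    fix k :: nat and c :: "'a set \<Rightarrow> nat"
    assume cb: "\<forall>X\<in>[S]\<^bsup>n\<^esup>. c X < k"
    define tpS where "tpS X = tpl h (Suc n) (sorted_list_of_set (e ` X))" for X
    define E where "E = ext n ` n_types n"
    obtain idx where idx: "bij_betw idx (n_types (Suc n)) {0..<T (Suc n)}"
      using ex_bij_betw_finite_nat[OF finite_n_types] unfolding T_def by blast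
    define init where "init X = {x\<in>X. e x \<noteq> Max (e ` X)}" for X
    define d where "d X = (if tpS X \<in> E then min (c (init X)) k
        else if tpS X \<in> n_types (Suc n) then k + idx (tpS X) else k)" for X
    define K where "K = k + T (Suc n) + 1"
    have dB: "d X < K" for X
    proof -
      have b: "R \<in> n_types (Suc n) \<Longrightarrow> idx R < T (Suc n)" for R using bij_betw_apply[OF idx] by auto
      show ?thesis unfolding d_def K_def using b[of "tpS X"] by auto
    qed
    have "\<exists>H\<in>W. card (d ` [H]\<^bsup>Suc n\<^esup>) \<le> T (Suc n)"
      using A7 dB unfolding weakly_Ramsey_def by blast
    then obtain H where HW: "H \<in> W" and Hc: "card (d ` [H]\<^bsup>Suc n\<^esup>) \<le> T (Suc n)" by blast
    define H' where "H' = H \<inter> G"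
    have H'W: "H' \<in> W" using uf_props(4)[OF U HW GW] by (simp add: H'_def)
    have H'G: "H' \<subseteq> G" by (auto simp: H'_def)
    have H'S: "H' \<subseteq> S" using H'G GS by auto
    have hlt: "h z < z" if zz: "z \<in> e ` H'" for z
    proof -
      obtain y where y: "y \<in> H'" "z = e y" using zz by blast
      have "y \<in> S" "y \<in> G" using y(1) H'G H'S by auto
      then show ?thesis using he[of y] Glt[of y] y(2) by simp
    qed
    have hne: "h z \<noteq> z'" if zz: "z \<in> e ` H'" "z' \<in> e ` H'" for z z'
    proof -
      obtain y where y: "y \<in> H'" "z = e y" using zz by blast
      obtain y' where y': "y' \<in> H'" "z' = e y'" using zz by blast
      have "y \<in> S" "y \<in> G" "y' \<in> G" using y(1) y'(1) H'G H'S by auto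
      then show ?thesis using y(2) y'(2) he[of y] Gne[of y y'] by simp
    qed
    define D where "D = d ` [H']\<^bsup>Suc n\<^esup>"
    have "D \<subseteq> {..<K}" using dB by (auto simp: D_def)
    then have finD: "finite D" by (rule finite_subset) simp
    have cardD: "card D \<le> T (Suc n)"
    proof -
      have s1: "D \<subseteq> d ` [H]\<^bsup>Suc n\<^esup>" unfolding D_def H'_def by (rule image_mono, rule nsets_mono) auto
      have "d ` [H]\<^bsup>Suc n\<^esup> \<subseteq> {..<K}" using dB by auto
      then have f1: "finite (d ` [H]\<^bsup>Suc n\<^esup>)" by (rule finite_subset) simp
      from card_mono[OF f1 s1] Hc show ?thesis by linarith
    qed
    define C where "C = c ` [H']\<^bsup>n\<^esup>"
    have CD: "C \<subseteq> D \<inter> {..<k}"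
    proof
      fix w assume "w \<in> C"
      then obtain Y where Y: "Y \<in> [H']\<^bsup>n\<^esup>" "w = c Y" by (auto simp: C_def)
      then have Yfin: "finite Y" "card Y = n" "Y \<subseteq> H'" by (auto simp: nsets_def)
      have YS: "Y \<in> [S]\<^bsup>n\<^esup>" using Y(1) H'S nsets_mono by blast
      define Z where "Z = e ` Y"
      define zs where "zs = sorted_list_of_set Z"
      have ijY: "inj_on e Y" using inj_on_subset[OF einj] Yfin(3) H'S by blast
      have finZ: "finite Z" using Yfin by (simp add: Z_def)
      have zsp: "sorted zs" "distinct zs" "set zs = Z" "length zs = n"
        using finZ Yfin ijY by (auto simp: zs_def Z_def card_image)
      have ZH: "Z \<subseteq> e ` H'" using Yfin by (auto simp: Z_def)
      obtain v where v: "v > Max (insert 0 Z)" "\<forall>B'. \<exists>z\<in>e ` H'. z > B' \<and> h z = v"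
        using Vq[OF H'W] by blast
      obtain z where z: "z \<in> e ` H'" "z > v" "h z = v" using v(2) by blast
      then obtain y where y: "y \<in> H'" "z = e y" by blast
      have Zlt: "u < v" if "u \<in> Z" for u
        using Max_ge[of "insert 0 Z" u] finZ that v(1) by auto
      have zZ: "u < z" if "u \<in> Z" for u using Zlt[of u] z(2) that by simp
      have yY: "y \<notin> Y" using Zlt[of z] z y by (auto simp: Z_def)
      define X where "X = insert y Y"
      have X: "X \<in> [H']\<^bsup>Suc n\<^esup>" using Yfin yY y by (auto simp: X_def nsets_def)
      have eX: "e ` X = insert z Z" by (simp add: X_def Z_def y)
      have sl: "sorted_list_of_set (e ` X) = zs @ [z]"
      proof -
        have zz: "u < z" if "u \<in> set zs" for u using Zlt[of u] z(2) zsp(3) that by simp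
        have "sorted (zs @ [z])" using zsp(1) zz by (auto simp: sorted_append intro: less_imp_le)
        moreover have "distinct (zs @ [z])" using zsp(2) zz by auto
        ultimately have "sorted_list_of_set (set (zs @ [z])) = zs @ [z]"
          by (rule sorted_list_of_set.idem_if_sorted_distinct)
        then show ?thesis using eX zsp by simp
      qed
      have a1: "\<forall>u\<in>set zs. h u < u" using zsp(3) ZH hlt by auto
      have a2: "\<forall>u\<in>set zs. \<forall>u'\<in>set zs. h u \<noteq> u'"
      proof (intro ballI)
        fix u u' assume "u \<in> set zs" "u' \<in> set zs"
        then have "u \<in> e ` H'" "u' \<in> e ` H'" using zsp(3) ZH by auto
        then show "h u \<noteq> u'" by (rule hne)
      qed
      have tpv: "tpl h n zs \<in> n_types n" using valid[OF zsp(1,2,4) a1 a2] .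
      have tpX: "tpS X = ext n (tpl h n zs)"
        unfolding tpS_def sl
      proof (rule ext_tpl[OF zsp(4)])
        show "\<forall>u\<in>set zs. h u < u \<and> u < h z" using zsp(3) ZH hlt Zlt z by auto
        show "h z < z" using hlt z by auto
      qed
      have MX: "Max (e ` X) = z" unfolding eX using finZ zZ by (intro Max_eqI) (auto intro: less_imp_le)
      have initX: "init X = Y"
      proof -
        have "e x \<noteq> z" if "x \<in> Y" for x using that zZ[of "e x"] by (auto simp: Z_def)
        then have "{x\<in>X. e x \<noteq> z} = Y" using y(2) by (auto simp: X_def)
        then show ?thesis unfolding init_def MX .
      qed
      have "d X = c Y" using tpX tpv cb YS initX by (auto simp: d_def E_def)
      then have "c Y \<in> D" unfolding D_def using X by (metis image_eqI)
      then show "w \<in> D \<inter> {..<k}" using Y cb YS by auto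
    qed
    define P where "P = (\<lambda>R. k + idx R) ` (n_types (Suc n) - E)"
    have PD: "P \<subseteq> D"
    proof
      fix w assume "w \<in> P"
      then obtain R where R: "R \<in> n_types (Suc n)" "R \<notin> E" "w = k + idx R" by (auto simp: P_def)
      define Vs where "Vs = {v. \<forall>B'. \<exists>z\<in>e ` H'. z > B' \<and> h z = v}"
      have Q1: "\<forall>B. \<exists>v>B. v \<in> Vs" using Vq[OF H'W] by (simp add: Vs_def)
      have Q2: "\<forall>v\<in>Vs. \<forall>B. \<exists>z\<in>e ` H'. z > B \<and> h z = v" by (simp add: Vs_def)
      obtain zs where zs: "sorted zs" "distinct zs" "length zs = Suc n" "set zs \<subseteq> e ` H'"
          "tpl h (Suc n) zs = R"
        using realize[OF R(1) Q1 Q2] by blast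
      define X where "X = inv_into S e ` set zs"
      have eX: "e ` X = set zs" unfolding X_def
        by (rule image_inv_into_cancel[of e S "e ` S"]) (use zs(4) H'S in auto)
      have XH: "X \<subseteq> H'"
      proof
        fix x assume "x \<in> X"
        then obtain u where "u \<in> set zs" "x = inv_into S e u" by (auto simp: X_def)
        then obtain y where "y \<in> H'" "x = inv_into S e (e y)" using zs(4) by auto
        then show "x \<in> H'" using inv_into_f_f[OF einj] H'S by auto
      qed
      have finX: "finite X" by (simp add: X_def)
      have "card X = card (e ` X)" using inj_on_subset[OF einj] XH H'S
        by (metis card_image subset_trans)
      also have "\<dots> = Suc n" using eX zs(2,3) by (simp add: distinct_card)
      finally have X: "X \<in> [H']\<^bsup>Suc n\<^esup>" using finX XH by (auto simp: nsets_def)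
      have "tpS X = R" unfolding tpS_def eX
        using sorted_list_of_set.idem_if_sorted_distinct[OF zs(1,2)] zs(5) by simp
      then have "d X = w" using R by (simp add: d_def)
      then show "w \<in> D" using X by (auto simp: D_def)
    qed
    have finE: "finite E" unfolding E_def using finite_n_types by simp
    have cardP: "card P = card (n_types (Suc n) - E)" unfolding P_def
    proof (rule card_image)
      have "inj_on idx (n_types (Suc n))" using bij_betw_imp_inj_on[OF idx] .
      then have "inj_on idx (n_types (Suc n) - E)" by (rule inj_on_subset) auto
      then show "inj_on (\<lambda>R. k + idx R) (n_types (Suc n) - E)" by (auto simp: inj_on_def)
    qed
    have cardE: "card E \<le> T n" unfolding E_def T_def by (rule card_image_le[OF finite_n_types])
    have cd: "T (Suc n) - card E \<le> card (n_types (Suc n) - E)"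
      using diff_card_le_card_Diff[OF finE, of "n_types (Suc n)"] by (simp add: T_def)
    have finC: "finite C" using CD finD finite_subset by blast
    have finP: "finite P" using PD finD finite_subset by blast
    have disj: "C \<inter> P = {}" using CD by (auto simp: P_def)
    have "card C + card P = card (C \<union> P)" using card_Un_disjoint[OF finC finP disj] by simp
    also have "\<dots> \<le> card D" using CD PD finD by (intro card_mono) auto
    finally have "card C \<le> T n" using cardD cardP cardE cd by linarith
    then show "\<exists>H\<in>W. card (c ` [H]\<^bsup>n\<^esup>) \<le> T n" using H'W by (auto simp: C_def)
  qed
qed

end
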